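(* Let $r\ge 1$, $m=2^r$, and let $n$ be a positive integer with $m\mid n$. Let $b$ be a positive integer having property $\mathcal{P}$ with respect to $n$. If $x^n+b^m$ is reducible over $\mathbb{Z}$, then both $b$ and $n/m$ are even.
   Context: For a positive integer $N$, a positive integer $b$ has property $\mathcal{P}$ with respect to $N$ if either $b$ is a prime number, or $b=(p_1^{b_1}p_2^{b_2}\cdots p_k^{b_k})^d$ where $k\ge 2$, $p_1,\dots,p_k$ are distinct primes, $b_1,\dots,b_k\ge 1$, $\gcd(b_1,\ldots,b_k)=1$, and $d$ is a positive integer with $\gcd(d,N)=1$. A monic polynomial in $\mathbb{Z}[x]$ of degree $\ge 1$ is reducible over $\mathbb{Z}$ if it is a product of two polynomials in $\mathbb{Z}[x]$ of degree at least $1$. *)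

theory Defs
  imports "HOL-Computational_Algebra.Computational_Algebra"
begin

definition property_P :: "nat \<Rightarrow> nat \<Rightarrow> bool" where
  "property_P N b \<longleftrightarrow>
     prime b \<or>
     (\<exists>(S::nat set) (e::nat \<Rightarrow> nat) (d::nat).
        finite S \<and> card S \<ge> 2 \<and> (\<forall>p\<in>S. prime p) \<and>
        (\<forall>p\<in>S. e p \<ge> 1) \<and> Gcd (e ` S) = 1 \<and>
        d > 0 \<and> coprime d N \<and>
        b = (\<Prod>p\<in>S. p ^ e p) ^ d)"

definition reducible_Z :: "int poly \<Rightarrow> bool" where
  "reducible_Z f \<longleftrightarrow> (\<exists>g h. f = g * h \<and> degree g \<ge> 1 \<and> degree h \<ge> 1)"

end

theory Submission
  imports Defs "HOL-Algebra.Embedded_Algebras" "HOL-Algebra.Finite_Extensions"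
    "Berlekamp_Zassenhaus.Reconstruction"
begin
hide_const (open) up_ring.monom Polynomials.degree Polynomials.lead_coeff Divisibility.irreducible Divisibility.prime up_ring.coeff

definition CR :: "complex ring" where
  "CR = \<lparr>carrier = UNIV, monoid.mult = (\<lambda>x y. x * y), one = 1, zero = 0, add = (\<lambda>x y. x + y)\<rparr>"

lemma field_CR: "field CR"
proof -
  have "\<exists>y. x + y = 0" for x :: complex
    using add.right_inverse by blast
  moreover have "x \<noteq> 0 \<Longrightarrow> \<exists>y. x * y = 1" for x :: complex
    by (rule exI[of _ "inverse x"]) auto
  ultimately show ?thesis
    unfolding CR_def using add.right_inverse
    by unfold_locales (auto simp:algebra_simps Units_def)
qed

interpretation CR: domain CR by (rule field.axioms(1)[OF field_CR])

lemma CR_simps[simp]: "carrier CR = UNIV" "x \<otimes>\<^bsub>CR\<^esub> y = x * y" "x \<oplus>\<^bsub>CR\<^esub> y = x + y"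
  "\<one>\<^bsub>CR\<^esub> = 1" "\<zero>\<^bsub>CR\<^esub> = 0"
  by (auto simp: CR_def)

lemma CR_pow[simp]: "x [^]\<^bsub>CR\<^esub> (n::nat) = x ^ n"
  by (induction n) (auto simp: mult.commute)

lemma CR_neg[simp]: "\<ominus>\<^bsub>CR\<^esub> x = - x"
  using CR.add.inv_equality[of "-x" x] by simp

lemma CR_inv[simp]: "x \<noteq> 0 \<Longrightarrow> inv\<^bsub>CR\<^esub> x = inverse x"
  using CR.comm_inv_char[of x "inverse x"] by simp

lemma subfield_Rats: "subfield \<rat> CR"
proof (rule field.subfieldI'[OF field_CR])
  show "subring \<rat> CR"
    by (rule CR.subringI) (auto)
  show "inv\<^bsub>CR\<^esub> k \<in> \<rat>" if "k \<in> \<rat> - {\<zero>\<^bsub>CR\<^esub>}" for k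
    using that by auto
qed

lemma CR_eval: "CR.eval ls x = poly (Poly (rev ls)) x"
  by (induction ls) (auto simp: Poly_append poly_monom mult.commute)

lemma map_poly_Poly_0: "f 0 = 0 \<Longrightarrow> map_poly f (Poly xs) = Poly (map f xs)"
proof (rule poly_eqI)
  fix n assume f0: "f 0 = 0"
  show "coeff (map_poly f (Poly xs)) n = coeff (Poly (map f xs)) n"
    using f0 by (cases "n < length xs") (auto simp: coeff_map_poly nth_default_def)
qed

lemma map_poly_of_rat_mult:
  "map_poly (of_rat :: rat \<Rightarrow> 'a::field_char_0) (p * q) = map_poly of_rat p * map_poly of_rat q"
  by (rule poly_eqI) (simp add: coeff_mult of_rat_sum of_rat_mult coeff_map_poly)

lemma irr_root_dvd:
  fixes p q :: "rat poly" and z :: complex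
  assumes irr: "irreducible p" and pz: "poly (map_poly of_rat p) z = 0"
    and qz: "poly (map_poly of_rat q) z = 0"
  shows "p dvd q"
proof (rule ccontr)
  assume nd: "\<not> p dvd q"
  have "coprime p q"
    using irr nd by (meson coprimeI dvd_trans irreducibleD')
  then have "gcd p q = 1" by simp
  then obtain a b where ab: "a * p + b * q = 1"
    using bezout_coefficients_fst_snd by metis
  have "map_poly (of_rat :: rat \<Rightarrow> complex) (a * p + b * q) = 1" by (simp add: ab)
  then have "poly (map_poly (of_rat :: rat \<Rightarrow> complex) (a * p + b * q)) z = 1" by simp
  moreover have "poly (map_poly (of_rat :: rat \<Rightarrow> complex) (a * p + b * q)) z = 0"
    using pz qz by (simp add: hom_distribs map_poly_of_rat_mult)
  ultimately show False by simp
qed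

definition pl :: "rat poly \<Rightarrow> complex list" where
  "pl p = rev (map of_rat (coeffs p))"

lemma pl_carrier: "pl p \<in> carrier (\<rat>[X]\<^bsub>CR\<^esub>)"
proof (cases "p = 0")
  case True then show ?thesis by (simp add: pl_def univ_poly_def polynomial_def)
next
  case False
  have "hd (pl p) = of_rat (lead_coeff p)"
    using False by (simp add: pl_def hd_rev last_map last_coeffs_eq_coeff_degree)
  then show ?thesis using False
    by (auto simp: pl_def univ_poly_def polynomial_def)
qed

lemma pl_eval: "CR.eval (pl p) x = poly (map_poly of_rat p) x"
  by (simp add: CR_eval pl_def map_poly_def)

lemma pl_degree: "Polynomials.degree (pl p) = degree p"
  by (cases "p = 0") (auto simp: pl_def length_coeffs_degree)

lemma pl_nonempty: "p \<noteq> 0 \<Longrightarrow> pl p \<noteq> []"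
  by (simp add: pl_def)

lemma Irr_degree:
  fixes p :: "rat poly" and z :: complex
  assumes irr: "irreducible p" and pz: "poly (map_poly of_rat p) z = 0"
  shows "(CR.algebraic over \<rat>) z" and "Polynomials.degree (CR.Irr \<rat> z) = degree p"
proof -
  have p0: "p \<noteq> 0" using irr by auto
  show alg: "(CR.algebraic over \<rat>) z"
    using CR.algebraicI[OF pl_carrier pl_nonempty[OF p0]] pz by (simp add: pl_eval over_def)
  have sr: "subring \<rat> CR" using subfieldE(1)[OF subfield_Rats] .
  note IrrE = CR.IrrE[OF subfield_Rats _ alg, simplified]
  have "CR.Irr \<rat> z pdivides\<^bsub>CR\<^esub> pl p"
    using CR.Irr_minimal[OF subfield_Rats _ alg pl_carrier] pz by (simp add: pl_eval)
  then have le1: "Polynomials.degree (CR.Irr \<rat> z) \<le> degree p"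
    using CR.pdivides_imp_degree_le[OF sr IrrE(1) pl_carrier pl_nonempty[OF p0]] pl_degree by simp
  define I where "I = CR.Irr \<rat> z"
  have Ine: "I \<noteq> []"
    using IrrE(1-2) unfolding I_def ring_irreducible_def univ_poly_zero by auto
  have Ic: "I \<in> carrier (\<rat>[X]\<^bsub>CR\<^esub>)" using IrrE(1) I_def by simp
  then have Iset: "set I \<subseteq> \<rat>" and Ihd: "hd I \<noteq> 0"
    using Ine by (auto simp: univ_poly_def polynomial_def)
  define ql :: "rat poly" where "ql = Poly (map (\<lambda>c. SOME r. c = of_rat r) (rev I))"
  have mm: "map of_rat (map (\<lambda>c. SOME r. c = (of_rat r :: complex)) (rev I)) = rev I"
    using Iset by (induction I) (auto, metis (mono_tags, lifting) Rats_cases someI)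
  have sel: "map_poly of_rat ql = Poly (rev I)"
    using mm by (simp add: ql_def map_poly_Poly_0)
  have cI: "coeffs (Poly (rev I)) = rev I"
    using Ine Ihd by (simp add: coeffs_Poly strip_while_def hd_rev last_rev) (cases I, auto)
  have dI: "degree (Poly (rev I)) = length I - 1"
    using cI Ine by (metis degree_eq_length_coeffs length_rev)
  have PI0: "Poly (rev I) \<noteq> 0" by (metis cI Ine coeffs_0_eq_Nil rev_is_Nil_conv)
  have ql0: "ql \<noteq> 0" using sel PI0 by auto
  have "poly (map_poly of_rat ql) z = 0"
    using IrrE(4) by (simp add: sel CR_eval[symmetric] I_def)
  then have "p dvd ql" by (rule irr_root_dvd[OF irr pz])
  then have "degree p \<le> degree ql" using ql0 by (rule dvd_imp_degree_le)
  also have "degree ql = degree (map_poly (of_rat :: rat \<Rightarrow> complex) ql)" by simp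
  also have "\<dots> = Polynomials.degree I" using sel dI by simp
  finally show "Polynomials.degree (CR.Irr \<rat> z) = degree p" using le1 I_def by simp
qed

lemma tower:
  fixes p q :: "rat poly" and \<alpha> \<gamma> :: complex
  assumes irrq: "irreducible q" and qa: "poly (map_poly of_rat q) \<alpha> = 0"
    and irrp: "irreducible p" and pg: "poly (map_poly of_rat p) \<gamma> = 0"
    and gE: "\<gamma> \<in> CR.simple_extension \<rat> \<alpha>"
  shows "degree p dvd degree q"
proof -
  define E where "E = CR.simple_extension \<rat> \<alpha>"
  define F where "F = CR.simple_extension \<rat> \<gamma>"
  note SQ = subfield_Rats
  have sr: "subring \<rat> CR" using subfieldE(1)[OF subfield_Rats] .
  note aa = Irr_degree[OF irrq qa] and ag = Irr_degree[OF irrp pg]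
  have sE: "subfield E CR"
    using CR.simple_extension_is_subfield[OF SQ, of \<alpha>] aa(1) by (simp add: E_def)
  have sF: "subfield F CR"
    using CR.simple_extension_is_subfield[OF SQ, of \<gamma>] ag(1) by (simp add: F_def)
  have dimE: "(CR.dim over \<rat>) E = degree q"
    using CR.simple_extension_dim[OF SQ _ aa(1)] aa(2) by (simp add: E_def)
  have dimF: "(CR.dim over \<rat>) F = degree p"
    using CR.simple_extension_dim[OF SQ _ ag(1)] ag(2) by (simp add: F_def)
  have fdF: "CR.finite_dimension \<rat> F"
    using CR.finite_dimension_simple_extension[OF SQ, of \<gamma>] ag(1) by (simp add: F_def)
  have subE: "subring E CR" using subfieldE(1)[OF sE] .
  have QE: "\<rat> \<subseteq> E" using CR.simple_extension_incl[of \<rat> \<alpha>] by (simp add: E_def)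
  have FE: "F \<subseteq> E"
    using CR.simple_extension_minimal[OF sr, of \<gamma>] subE QE gE by (auto simp: F_def E_def)
  define Us where "Us = CR.exp_base \<alpha> (Polynomials.degree (CR.Irr \<rat> \<alpha>))"
  have EU: "CR.Span \<rat> Us = E"
    using CR.Span_exp_base[OF SQ _ aa(1)] by (simp add: Us_def E_def)
  have Uc: "set Us \<subseteq> carrier CR" by simp
  have UE: "set Us \<subseteq> E" using CR.Span_base_incl[OF SQ Uc] EU by simp
  have "CR.Span F Us \<subseteq> E"
  proof (rule CR.Span_min[OF sF Uc])
    show "subgroup E (add_monoid CR)" using CR.Span_is_add_subgroup[OF SQ Uc] EU by simp
    show "F <#>\<^bsub>CR\<^esub> set Us \<subseteq> E"
      using FE UE subringE(6)[OF subE] by (auto simp: set_mult_def)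
  qed
  moreover have "E \<subseteq> CR.Span F Us"
  proof -
    have "CR.Span \<rat> Us \<subseteq> CR.Span F Us"
    proof (rule CR.Span_min[OF SQ Uc])
      show "subgroup (CR.Span F Us) (add_monoid CR)" using CR.Span_is_add_subgroup[OF sF Uc] .
      show "\<rat> <#>\<^bsub>CR\<^esub> set Us \<subseteq> CR.Span F Us"
      proof -
        have "\<rat> \<subseteq> F" using CR.simple_extension_incl[of \<rat> \<gamma>] by (simp add: F_def)
        then have "\<rat> <#>\<^bsub>CR\<^esub> set Us \<subseteq> F <#>\<^bsub>CR\<^esub> set Us" by (auto simp: set_mult_def)
        then show ?thesis using CR.Span_incl[OF sF Uc] by blast
      qed
    qed
    then show ?thesis using EU by simp
  qed
  ultimately have "CR.Span F Us = E" by blast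
  then have fdE: "CR.finite_dimension F E"
    using CR.Span_finite_dimension[OF sF Uc] by simp
  have "(CR.dim over \<rat>) E = (CR.dim over \<rat>) F * (CR.dim over F) E"
    using CR.telescopic_base_dim(2)[OF SQ sF fdF fdE] .
  then show ?thesis using dimE dimF by simp
qed


lemma eis_core:
  fixes A B Q :: "int poly"
  assumes QAB: "Q = A * B" and A0: "even (coeff A 0)" and B0: "odd (coeff B 0)"
    and lc: "odd (lead_coeff Q)" and ev: "\<forall>i<degree Q. even (coeff Q i)"
  shows "degree B = 0"
proof -
  have Q0: "Q \<noteq> 0" using lc by auto
  then have A0': "A \<noteq> 0" "B \<noteq> 0" using QAB by auto
  have dQ: "degree Q = degree A + degree B" using QAB A0' by (simp add: degree_mult_eq)
  have "lead_coeff Q = lead_coeff A * lead_coeff B" using QAB by (simp add: lead_coeff_mult)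
  then have oA: "odd (coeff A (degree A))" using lc by simp
  define s where "s = (LEAST i. odd (coeff A i))"
  have sA: "odd (coeff A s)" unfolding s_def by (rule LeastI[of _ "degree A"]) (rule oA)
  have sle: "s \<le> degree A" unfolding s_def by (rule Least_le) (rule oA)
  have below: "even (coeff A i)" if "i < s" for i
    using not_less_Least[of i "\<lambda>i. odd (coeff A i)"] that unfolding s_def by blast
  have "coeff Q s = sum (\<lambda>i. coeff A i * coeff B (s - i)) {..s}" using QAB by (simp add: coeff_mult)
  also have "\<dots> = sum (\<lambda>i. coeff A i * coeff B (s - i)) {..<s} + coeff A s * coeff B 0"
    by (simp flip: lessThan_Suc_atMost add: sum.lessThan_Suc)
  finally have cs: "coeff Q s = sum (\<lambda>i. coeff A i * coeff B (s - i)) {..<s} + coeff A s * coeff B 0" .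
  have "even (sum (\<lambda>i. coeff A i * coeff B (s - i)) {..<s})"
    by (rule dvd_sum) (simp add: below)
  moreover have "odd (coeff A s * coeff B 0)" using sA B0 by simp
  ultimately have "odd (coeff Q s)" using cs by simp
  then have "\<not> s < degree Q" using ev by auto
  then show ?thesis using dQ sle by simp
qed

lemma eis2:
  fixes A B Q :: "int poly"
  assumes QAB: "Q = A * B"
    and lc: "odd (lead_coeff Q)" and ev: "\<forall>i<degree Q. even (coeff Q i)"
    and n4: "\<not> 4 dvd coeff Q 0"
  shows "degree A = 0 \<or> degree B = 0"
proof (cases "degree Q = 0")
  case True
  have "Q \<noteq> 0" using lc by auto
  then have "A \<noteq> 0" "B \<noteq> 0" using QAB by auto
  then show ?thesis using True QAB by (simp add: degree_mult_eq)
next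
  case False
  then have e0: "even (coeff Q 0)" using ev by auto
  have c0: "coeff Q 0 = coeff A 0 * coeff B 0" using QAB by (simp add: coeff_mult_0)
  have "(even (coeff A 0) \<and> odd (coeff B 0)) \<or> (odd (coeff A 0) \<and> even (coeff B 0))"
  proof -
    have "\<not> (even (coeff A 0) \<and> even (coeff B 0))"
    proof
      assume "even (coeff A 0) \<and> even (coeff B 0)"
      then obtain a b where "coeff A 0 = 2 * a" "coeff B 0 = 2 * b" by (auto elim!: evenE)
      then have "coeff Q 0 = 4 * (a * b)" using c0 by simp
      then show False using n4 by simp
    qed
    then show ?thesis using e0 c0 by auto
  qed
  then show ?thesis
  proof
    assume "even (coeff A 0) \<and> odd (coeff B 0)"
    then show ?thesis using eis_core[OF QAB _ _ lc ev] by simp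
  next
    assume h: "odd (coeff A 0) \<and> even (coeff B 0)"
    have "Q = B * A" using QAB by (simp add: mult.commute)
    then show ?thesis using eis_core[OF _ _ _ lc ev, of B A] h by simp
  qed
qed

lemma pcompose_pow: "(p ^ n) \<circ>\<^sub>p q = (p \<circ>\<^sub>p q) ^ n"
proof (induction n)
  case 0
  have "(1 :: 'a poly) \<circ>\<^sub>p q = 1" unfolding one_pCons by (rule pcompose_const)
  then show ?case by simp
next
  case (Suc n)
  then show ?case by (simp add: pcompose_mult)
qed

lemma binom_pow2_even:
  assumes "0 < i" "i < 2 ^ s"
  shows "even (2 ^ s choose i)"
proof (rule ccontr)
  assume od: "odd (2 ^ s choose i)"
  have "i * (2 ^ s choose i) = 2 ^ s * (2 ^ s - 1 choose (i - 1))"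
    using times_binomial_minus1_eq[OF assms(1)] .
  then have dv: "2 ^ s dvd i * (2 ^ s choose i)" by simp
  have cp: "Rings.coprime ((2::nat) ^ s) (2 ^ s choose i)" using od by simp
  have "2 ^ s dvd i" using dv coprime_dvd_mult_left_iff[OF cp] by simp
  then show False using assms by (simp add: nat_dvd_not_less)
qed

lemma eis_irr:
  fixes c :: int and s :: nat
  assumes s1: "s \<ge> 1" and c4: "c mod 4 = 1"
  shows "irreducible (monom 1 (2 ^ s) + [:rat_of_int c:] :: rat poly)"
proof -
  define M :: nat where "M = 2 ^ s"
  have M2: "M \<ge> 2" using s1 unfolding M_def
    by (metis one_less_numeral_iff power_increasing_iff power_one_right semiring_norm(76))
  define Pi :: "int poly" where "Pi = monom 1 M + [:c:]"
  define P :: "rat poly" where "P = monom 1 M + [:rat_of_int c:]"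
  have mP: "map_poly rat_of_int Pi = P"
    by (simp add: Pi_def P_def map_poly_monom hom_distribs)
  have dP: "degree P = M" using M2 by (simp add: P_def degree_add_eq_left degree_monom_eq)
  have P0: "P \<noteq> 0" using dP M2 by auto
  define Q where "Q = Pi \<circ>\<^sub>p [:1, 1:]"
  have Qeq: "Q = [:1, 1:] ^ M + [:c:]"
    by (simp add: Q_def Pi_def pcompose_add pcompose_const monom_altdef pcompose_smult pcompose_pCons pcompose_pow)
  have dl: "degree ([:1, 1:] ^ M :: int poly) = M" by (rule degree_linear_power)
  have dQ: "degree Q = M" unfolding Qeq
    by (subst degree_add_eq_left) (use dl M2 in auto)
  have cQ: "coeff Q i = int (M choose i) + (if i = 0 then c else 0)" if "i \<le> M" for i
  proof -
    have "coeff ([:1,1:]^M :: int poly) i = int (M choose i)"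
      using coeff_linear_poly_power[of i M "1::int" 1] that by simp
    then show ?thesis unfolding Qeq by (simp add: coeff_pCons split: nat.split)
  qed
  have "c = 4 * (c div 4) + c mod 4" by simp
  then have ct: "c = 4 * (c div 4) + 1" using c4 by simp
  define t where "t = c div 4"
  have ct: "c = 4 * t + 1" using ct by (simp add: t_def)
  have lcQ: "odd (lead_coeff Q)" using dQ cQ[of M] M2 by simp
  have evQ: "\<forall>i<degree Q. even (coeff Q i)"
  proof (intro allI impI)
    fix i assume i: "i < degree Q"
    show "even (coeff Q i)"
    proof (cases "i = 0")
      case True
      then have "coeff Q i = 1 + c" using cQ[of 0] by simp
      then show ?thesis using ct by simp
    next
      case False
      then have "even (M choose i)" using binom_pow2_even[of i s] i dQ unfolding M_def by simp
      then show ?thesis using cQ[of i] i dQ False by simp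
    qed
  qed
  have n4: "\<not> 4 dvd coeff Q 0" using cQ[of 0] ct by simp presburger
  have nu: "\<not> P dvd 1" using dP M2 by (simp add: is_unit_field_poly)
  have fa: "\<forall>a b. P = a * b \<longrightarrow> a dvd 1 \<or> b dvd 1"
  proof (intro allI impI)
    fix a b assume ab: "P = a * b"
    then have ab0: "a \<noteq> 0" "b \<noteq> 0" using P0 by auto
    from rat_to_int_factor[of Pi a b] ab mP obtain a' b' where
      fac: "Pi = a' * b'" "degree a' = degree a" "degree b' = degree b" by auto
    have "Q = (a' \<circ>\<^sub>p [:1, 1:]) * (b' \<circ>\<^sub>p [:1, 1:])" using fac(1) by (simp add: Q_def pcompose_mult)
    from eis2[OF this lcQ evQ n4] have "degree a' = 0 \<or> degree b' = 0"
      by (simp add: degree_pcompose)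
    then show "a dvd 1 \<or> b dvd 1" using fac ab0 by (auto simp: is_unit_field_poly)
  qed
  have "irreducible P" unfolding Factorial_Ring.comm_semiring_1_class.irreducible_def
    by (intro conjI) (rule P0, rule nu, rule fa)
  then show ?thesis unfolding P_def M_def .
qed


lemma const_abs_roots:
  fixes Qc :: "complex poly" and \<beta> :: real
  assumes "Qc \<noteq> 0" "\<And>z. poly Qc z = 0 \<Longrightarrow> cmod z = \<beta>"
  shows "cmod (coeff Qc 0) = cmod (lead_coeff Qc) * \<beta> ^ degree Qc"
  using assms
proof (induction "degree Qc" arbitrary: Qc)
  case 0
  then show ?case by simp
next
  case (Suc d)
  have "\<not> constant (poly Qc)" using Suc.hyps(2) by (simp add: constant_degree)
  then obtain z where z: "poly Qc z = 0" using fundamental_theorem_of_algebra by blast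
  then obtain R where R: "Qc = [:-z, 1:] * R" using poly_eq_0_iff_dvd by (metis dvdE)
  have R0: "R \<noteq> 0" using R Suc.prems(1) by auto
  have "degree ([:-z, 1:] * R) = Suc (degree R)" using R0 by (subst degree_mult_eq) auto
  then have dR: "degree R = d" using R Suc.hyps(2) by simp
  have roots: "cmod w = \<beta>" if "poly R w = 0" for w
    using Suc.prems(2)[of w] that R by simp
  have IH: "cmod (coeff R 0) = cmod (lead_coeff R) * \<beta> ^ degree R"
    using Suc.hyps(1)[OF dR[symmetric] R0 roots] by blast
  have "coeff Qc 0 = - z * coeff R 0" using R by (simp add: coeff_mult_0)
  moreover have "lead_coeff Qc = lead_coeff [:-z, 1:] * lead_coeff R" unfolding R by (rule lead_coeff_mult)
  then have "lead_coeff Qc = lead_coeff R" by simp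
  moreover have "cmod z = \<beta>" using Suc.prems(2) z by blast
  ultimately show ?case using IH dR Suc.hyps(2)[symmetric] by (simp add: norm_mult)
qed

lemma const_term:
  fixes g h :: "int poly" and B :: int and n :: nat
  assumes f: "monom 1 n + [:B:] = g * h" and n0: "n > 0" and B0: "B > 0"
  shows "\<bar>coeff g 0\<bar> ^ n = B ^ degree g"
proof -
  define Gc where "Gc = map_poly (of_int :: int \<Rightarrow> complex) g"
  define \<beta> where "\<beta> = root n (real_of_int B)"
  have df: "degree (monom 1 n + [:B:] :: int poly) = n" using n0 by (simp add: degree_add_eq_left degree_monom_eq)
  have fne: "monom 1 n + [:B:] \<noteq> 0" using df n0 by auto
  have g0: "g \<noteq> 0" "h \<noteq> 0" using f fne by auto
  have "coeff [:B:] n = 0" using n0 by (cases n) auto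
  then have lf: "lead_coeff (monom 1 n + [:B:]) = 1" by (simp add: df)
  then have "lead_coeff g * lead_coeff h = 1" using f by (simp add: lead_coeff_mult)
  then have lg: "\<bar>lead_coeff g\<bar> = 1" using abs_zmult_eq_1[of "lead_coeff g" "lead_coeff h"] by simp
  have roots: "cmod z = \<beta>" if "poly Gc z = 0" for z
  proof -
    have "map_poly (of_int :: int \<Rightarrow> complex) (monom 1 n + [:B:]) = Gc * map_poly of_int h"
      unfolding Gc_def f by (simp add: of_int_poly_hom.hom_mult)
    then have "poly (map_poly (of_int :: int \<Rightarrow> complex) (monom 1 n + [:B:])) z = 0" using that by simp
    then have "z ^ n + of_int B = 0" by (simp add: map_poly_monom poly_monom hom_distribs)
    then have "z ^ n = - of_int B" by (simp add: eq_neg_iff_add_eq_0)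
    then have "cmod (z ^ n) = cmod (- (of_int B :: complex))" by simp
    also have "\<dots> = real_of_int B" using B0 by simp
    finally have "cmod z ^ n = real_of_int B" by (simp add: norm_power)
    from real_root_pos_unique[OF n0 norm_ge_zero this] show ?thesis unfolding \<beta>_def by simp
  qed
  have Gc0: "Gc \<noteq> 0" using g0 by (simp add: Gc_def)
  have dG: "degree Gc = degree g" by (simp add: Gc_def)
  have "cmod (coeff Gc 0) = cmod (lead_coeff Gc) * \<beta> ^ degree Gc"
    by (rule const_abs_roots[OF Gc0 roots])
  moreover have "\<bar>real_of_int (lead_coeff g)\<bar> = 1" using lg by (metis of_int_abs of_int_1)
  ultimately have "\<bar>real_of_int (coeff g 0)\<bar> = \<beta> ^ degree g"
    using dG by (simp add: Gc_def)
  then have "\<bar>real_of_int (coeff g 0)\<bar> ^ n = (\<beta> ^ n) ^ degree g" by (simp flip: power_mult add: mult.commute)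
  also have "\<beta> ^ n = real_of_int B" unfolding \<beta>_def using n0 B0 by simp
  finally have "real_of_int (\<bar>coeff g 0\<bar> ^ n) = real_of_int (B ^ degree g)" by simp
  then show ?thesis by (simp only: of_int_eq_iff)
qed

lemma kdvdj:
  fixes n b c k j m :: nat
  assumes P: "property_P n b" and b0: "b > 0" and eq: "c ^ k = b ^ j" and nmk: "n = m * k" and k0: "k > 0"
  shows "k dvd j"
proof -
  have c0: "c \<noteq> 0"
  proof
    assume "c = 0"
    then have "c ^ k = 0" using k0 by (simp add: zero_power)
    then have "b ^ j = 0" by (simp only: eq[symmetric])
    then show False using b0 by simp
  qed
  have mc: "multiplicity p (b ^ j) = k * multiplicity p c" if "prime p" for p
  proof -
    have "multiplicity p (b ^ j) = multiplicity p (c ^ k)" by (simp only: eq)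
    also have "\<dots> = k * multiplicity p c"
      by (rule prime_elem_multiplicity_power_distrib) (use that c0 in auto)
    finally show ?thesis .
  qed
  from P consider "prime b" | S e d where "finite S" "card S \<ge> 2" "\<forall>p\<in>S. prime p"
    "\<forall>p\<in>S. e p \<ge> 1" "Gcd (e ` S) = 1" "d > 0" "Rings.coprime d n" "b = (\<Prod>p\<in>S. p ^ e p) ^ d"
    unfolding property_P_def by blast
  then show ?thesis
  proof cases
    case 1
    have "multiplicity b (b ^ j) = j" using 1 by (simp add: multiplicity_same_power)
    then have "k * multiplicity b c = j" using mc[OF 1] by simp
    then show ?thesis by (metis dvd_triv_left)
  next
    case 2
    have "k dvd (j * d) * e p" if pS: "p \<in> S" for p
    proof -
      have pp: "prime p" using 2(3) pS by blast
      have A0': "(\<Prod>p\<in>S. p ^ e p) > 0" using 2(3) by (intro prod_pos) (auto intro: prime_gt_0_nat)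
      then have A0: "(\<Prod>p\<in>S. p ^ e p) \<noteq> 0" by simp
      have "multiplicity p (\<Prod>p\<in>S. p ^ e p) = e p"
        using multiplicity_prod_prime_powers[OF 2(1) _ pp, of e] 2(3) pS by auto
      then have "multiplicity p b = d * e p"
        using 2(8) pp A0 by (simp add: prime_elem_multiplicity_power_distrib)
      then have "multiplicity p (b ^ j) = j * (d * e p)"
        using pp b0 by (simp add: prime_elem_multiplicity_power_distrib)
      then show ?thesis using mc[OF pp] by (metis dvd_triv_left mult.assoc)
    qed
    then have "k dvd Gcd ((\<lambda>p. (j * d) * e p) ` S)" by (auto intro: Gcd_greatest)
    also have "(\<lambda>p. (j * d) * e p) ` S = (*) (j * d) ` (e ` S)" by auto
    also have "Gcd \<dots> = j * d" using 2(5) by (simp add: Gcd_mult)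
    finally have kjd: "k dvd j * d" .
    have cpk: "Rings.coprime k d"
      using 2(7) nmk by (metis Rings.coprime_commute coprime_mult_right_iff)
    show ?thesis using kjd coprime_dvd_mult_left_iff[OF cpk] by simp
  qed
qed


lemma map_of_rat_of_int[simp]:
  "map_poly (of_rat :: rat \<Rightarrow> 'a::field_char_0) (of_int B) = of_int B"
  unfolding of_int_poly by (rule poly_eqI) (auto simp: coeff_map_poly coeff_pCons split: nat.split)

lemma map_binom:
  "map_poly (of_rat :: rat \<Rightarrow> complex) (monom 1 N + [:c:]) = monom 1 N + [:of_rat c:]"
  by (rule poly_eqI) (auto simp: coeff_map_poly coeff_monom coeff_pCons of_rat_add split: nat.split)

lemma poly_binom: "poly (monom 1 N + [:c:]) (z::complex) = z ^ N + c"
  by (simp add: poly_monom)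

lemma odd_part: "(n::nat) > 0 \<Longrightarrow> \<exists>e w. n = 2 ^ e * w \<and> odd w"
proof (induction n rule: less_induct)
  case (less n)
  show ?case
  proof (cases "even n")
    case True
    then obtain n' where n': "n = 2 * n'" by blast
    then have "n' < n" "n' > 0" using less.prems by auto
    then obtain e w where "n' = 2 ^ e * w" "odd w" using less.IH by blast
    then have "n = 2 ^ Suc e * w \<and> odd w" using n' by simp
    then show ?thesis by blast
  next
    case False
    then have "n = 2 ^ 0 * n \<and> odd n" by simp
    then show ?thesis by blast
  qed
qed

lemma odd_sq_mod4: "odd (x::int) \<Longrightarrow> x ^ 2 mod 4 = 1"
proof -
  assume "odd x"
  then obtain t where "x = 2 * t + 1" by (blast elim: oddE)
  then have eq: "x ^ 2 = 4 * (t * t + t) + 1" by (simp add: power2_eq_square algebra_simps)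
  have h: "(4 * u + 1) mod 4 = (1::int)" for u by presburger
  show ?thesis by (metis h eq)
qed

lemma SE_subring: "subring (CR.simple_extension \<rat> \<alpha>) CR"
  using CR.simple_extension_is_subring[OF subfieldE(1)[OF subfield_Rats], of \<alpha>] by simp

lemma SE_pow: "\<alpha> ^ i \<in> CR.simple_extension \<rat> \<alpha>"
proof (induction i)
  case 0
  then show ?case using subringE(3)[OF SE_subring[of \<alpha>]] by simp
next
  case (Suc i)
  have "\<alpha> \<in> CR.simple_extension \<rat> \<alpha>"
    using CR.simple_extension_mem[OF subfieldE(1)[OF subfield_Rats], of \<alpha>] by simp
  then show ?case using subringE(6)[OF SE_subring[of \<alpha>], of \<alpha> "\<alpha> ^ i"] Suc by simp
qed

lemma SE_rat: "x \<in> \<rat> \<Longrightarrow> x \<in> CR.simple_extension \<rat> \<alpha>"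
  using CR.simple_extension_incl[of \<rat> \<alpha>] by auto

lemma SE_mult: "x \<in> CR.simple_extension \<rat> \<alpha> \<Longrightarrow> y \<in> CR.simple_extension \<rat> \<alpha> \<Longrightarrow>
  x * y \<in> CR.simple_extension \<rat> \<alpha>"
  using subringE(6)[OF SE_subring[of \<alpha>], of x y] by simp

theorem corollary2:
  fixes r n b m :: nat
  assumes "r \<ge> 1" and "m = 2 ^ r" and "n > 0" and "m dvd n"
    and "b > 0" and "property_P n b"
    and "reducible_Z (monom 1 n + [:int b ^ m:])"
  shows "even b \<and> even (n div m)"
proof (rule ccontr)
  assume nc: "\<not> (even b \<and> even (n div m))"
  define k where "k = n div m"
  have m2: "m \<ge> 2"
  proof -
    have "(2::nat) ^ 1 \<le> 2 ^ r" using assms(1) by (rule power_increasing) simp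
    then show ?thesis using assms(2) by simp
  qed
  have nmk: "n = m * k" using assms(4) by (simp add: k_def)
  have k0: "k > 0" using nmk assms(3) by (cases k) auto
  define B :: int where "B = int b ^ m"
  have B0: "B > 0" using assms(5) by (simp add: B_def)
  from assms(7) obtain g h where gh: "monom 1 n + [:int b ^ m:] = g * h" "degree g \<ge> 1" "degree h \<ge> 1"
    unfolding reducible_Z_def by blast
  have ghB: "monom 1 n + [:B:] = g * h" using gh(1) by (simp add: B_def)
  have df: "degree (monom 1 n + [:B:] :: int poly) = n"
    using assms(3) by (simp add: degree_add_eq_left degree_monom_eq)
  have g0: "g \<noteq> 0" "h \<noteq> 0" using gh(2,3) by auto
  have "degree g + degree h = n" using ghB df g0 by (simp add: degree_mult_eq)
  then have dgn: "degree g < n" using gh(3) by simp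
  define G where "G = map_poly rat_of_int g"
  define Fr where "Fr = monom 1 n + [:rat_of_int B:]"
  have Frm: "Fr = map_poly rat_of_int (monom 1 n + [:B:])"
    by (simp add: Fr_def map_poly_monom hom_distribs)
  have FrG: "Fr = G * map_poly rat_of_int h"
    unfolding Frm G_def ghB by (simp add: of_int_poly_hom.hom_mult)
  have G0: "G \<noteq> 0" using g0 by (simp add: G_def)
  have dG: "degree G = degree g" by (simp add: G_def)
  have nuG: "\<not> is_unit G" using G0 dG gh(2) by (simp add: is_unit_field_poly)
  obtain q where qG: "q dvd G" and pq: "prime q" using prime_divisor_exists[OF G0 nuG] by blast
  have pe: "prime_elem q" by (rule prime_imp_prime_elem[OF pq])
  have irrq: "irreducible q" by (rule Factorial_Ring.algebraic_semidom_class.prime_elem_imp_irreducible[OF pe])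
  have q0: "q \<noteq> 0" and qnu: "\<not> is_unit q" using pe by (auto simp: prime_elem_def)
  define j where "j = degree q"
  have "degree q \<noteq> 0" using q0 qnu by (simp add: is_unit_field_poly)
  then have j0: "j > 0" unfolding j_def by simp
  have jn: "j < n" using dvd_imp_degree_le[OF qG G0] dG dgn unfolding j_def by simp
  have qFr: "q dvd Fr" using qG FrG by (metis dvd_mult2)
  then obtain rr where Frq: "Fr = q * rr" by (elim dvdE)
  from rat_to_int_factor[of "monom 1 n + [:B:]" q rr] Frq Frm obtain g' h' where
    gh': "monom 1 n + [:B:] = g' * h'" "degree g' = degree q" by auto
  have ct: "\<bar>coeff g' 0\<bar> ^ n = B ^ j"
    using const_term[OF gh'(1) assms(3) B0] gh'(2) unfolding j_def by simp
  define c :: nat where "c = nat \<bar>coeff g' 0\<bar>"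
  have ic: "int c = \<bar>coeff g' 0\<bar>" by (simp add: c_def)
  have "int (c ^ n) = \<bar>coeff g' 0\<bar> ^ n" by (simp add: ic)
  also have "\<dots> = B ^ j" by (rule ct)
  also have "\<dots> = int b ^ (m * j)" unfolding B_def by (rule power_mult[symmetric])
  also have "\<dots> = int ((b ^ j) ^ m)" by (simp add: power_mult[symmetric] mult.commute)
  finally have "c ^ n = (b ^ j) ^ m" by (simp only: of_nat_eq_iff)
  moreover have "c ^ n = c ^ (k * m)" using nmk by (simp add: mult.commute)
  moreover have "c ^ (k * m) = (c ^ k) ^ m" by (rule power_mult)
  ultimately have "(c ^ k) ^ m = (b ^ j) ^ m" by simp
  then have ckbj: "c ^ k = b ^ j" using m2 by (simp add: power_eq_iff_eq_base)
  have kj: "k dvd j" using kdvdj[OF assms(6) assms(5) ckbj nmk k0] .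
  have "degree (map_poly (of_rat :: rat \<Rightarrow> complex) q) = j" by (simp add: j_def)
  then have "\<not> constant (poly (map_poly (of_rat :: rat \<Rightarrow> complex) q))"
    using j0 by (simp add: constant_degree)
  then obtain \<alpha> where qa: "poly (map_poly (of_rat :: rat \<Rightarrow> complex) q) \<alpha> = 0"
    using fundamental_theorem_of_algebra by blast
  have "poly (map_poly (of_rat :: rat \<Rightarrow> complex) Fr) \<alpha> = 0"
    using qa Frq by (simp add: map_poly_of_rat_mult)
  then have "\<alpha> ^ n + of_int B = 0"
    by (simp add: Fr_def map_poly_monom hom_distribs poly_monom)
  then have an: "\<alpha> ^ n = - of_int B" by (simp add: eq_neg_iff_add_eq_0)
  show False
  proof (cases "odd b")
    case True
    obtain e w where neo: "n = 2 ^ e * w" "odd w" using odd_part[OF assms(3)] by blast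
    have dv: "2 ^ r dvd 2 ^ e * w" using assms(2,4) neo by simp
    have cp: "Rings.coprime ((2::nat) ^ r) w" using neo(2) by simp
    have "(2::nat) ^ r dvd 2 ^ e" using dv coprime_dvd_mult_left_iff[OF cp] by simp
    then have re: "r \<le> e" by (simp add: dvd_power_iff_le)
    then have e1: "e \<ge> 1" using assms(1) by simp
    have e2: "(2::nat) ^ e = 2 ^ r * 2 ^ (e - r)" using re by (simp flip: power_add)
    have "m * k = 2 ^ e * w" using nmk neo by simp
    also have "\<dots> = 2 ^ r * (2 ^ (e - r) * w)" using e2 by (simp add: mult.assoc)
    finally have "m * k = m * (2 ^ (e - r) * w)" using assms(2) by simp
    then have "k = 2 ^ (e - r) * w" using m2 by simp
    then have "w dvd k" by simp
    then have oj: "w dvd j" using kj by (rule dvd_trans)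
    have B4: "B mod 4 = 1"
    proof -
      have m22: "m = 2 ^ (r - 1) * 2" using assms(1,2) by (cases r) auto
      have "B = int b ^ (2 ^ (r - 1) * 2)" using m22 by (simp add: B_def)
      also have "\<dots> = (int b ^ (2 ^ (r - 1))) ^ 2" by (rule power_mult)
      finally have eqB: "B = (int b ^ (2 ^ (r - 1))) ^ 2" .
      have oddb: "odd (int b ^ (2 ^ (r - 1)))" using True by simp
      show ?thesis unfolding eqB by (rule odd_sq_mod4[OF oddb])
    qed
    define P :: "rat poly" where "P = monom 1 (2 ^ e) + [:rat_of_int B:]"
    have irrP: "irreducible P" unfolding P_def by (rule eis_irr[OF e1 B4])
    define \<gamma> where "\<gamma> = \<alpha> ^ w"
    have "\<gamma> ^ (2 ^ e) = \<alpha> ^ (w * 2 ^ e)" unfolding \<gamma>_def by (rule power_mult[symmetric])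
    also have "w * 2 ^ e = n" using neo by simp
    finally have gpow: "\<gamma> ^ (2 ^ e) = \<alpha> ^ n" .
    have "poly (map_poly of_rat P) \<gamma> = \<gamma> ^ (2 ^ e) + of_rat (rat_of_int B)"
      by (simp only: P_def map_binom poly_binom)
    also have "\<dots> = \<alpha> ^ n + of_int B" by (simp only: gpow of_rat_of_int_eq)
    also have "\<dots> = 0" by (simp only: an add.left_inverse)
    finally have Pg: "poly (map_poly of_rat P) \<gamma> = 0" .
    have gE: "\<gamma> \<in> CR.simple_extension \<rat> \<alpha>" unfolding \<gamma>_def by (rule SE_pow)
    have "degree P dvd degree q" by (rule tower[OF irrq qa irrP Pg gE])
    moreover have "degree P = 2 ^ e" by (simp add: P_def degree_add_eq_left degree_monom_eq)
    ultimately have ej: "2 ^ e dvd j" by (simp add: j_def)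
    have "Rings.coprime ((2::nat) ^ e) w" using neo(2) by simp
    then have "2 ^ e * w dvd j" using ej oj by (rule divides_mult[rotated 2]) 
    then have "n dvd j" using neo by simp
    then show False using j0 jn by (simp add: nat_dvd_not_less)
  next
    case False
    then have ok: "odd k" using nc by (simp add: k_def)
    define P :: "rat poly" where "P = monom 1 (2 ^ r) + [:rat_of_int 1:]"
    have irrP: "irreducible P" unfolding P_def by (rule eis_irr[OF assms(1)]) simp
    define \<gamma> where "\<gamma> = \<alpha> ^ k * of_rat (1 / of_nat b)"
    have b0: "(of_nat b :: complex) \<noteq> 0" using assms(5) by simp
    have g1: "\<gamma> ^ m = (\<alpha> ^ k) ^ m * (of_rat (1 / of_nat b)) ^ m" by (simp add: \<gamma>_def power_mult_distrib)
    have "(\<alpha> ^ k) ^ m = \<alpha> ^ (k * m)" by (rule power_mult[symmetric])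
    also have "k * m = n" using nmk by simp
    finally have g2: "(\<alpha> ^ k) ^ m = \<alpha> ^ n" .
    have g3: "(of_rat (1 / of_nat b) :: complex) = 1 / of_nat b" by (simp add: of_rat_divide)
    have g4: "(of_int B :: complex) = of_nat b ^ m" by (simp add: B_def)
    have gm: "\<gamma> ^ m = -1" using g1 g2 g3 g4 an b0 by (simp add: power_divide)
    have "poly (map_poly of_rat P) \<gamma> = \<gamma> ^ (2 ^ r) + of_rat (rat_of_int 1)"
      by (simp only: P_def map_binom poly_binom)
    also have "\<dots> = \<gamma> ^ m + 1" by (simp only: assms(2) of_rat_of_int_eq of_int_1 of_rat_1)
    also have "\<dots> = 0" by (simp only: gm add.left_inverse)
    finally have Pg: "poly (map_poly of_rat P) \<gamma> = 0" .
    have "(of_rat (1 / of_nat b) :: complex) \<in> \<rat>" by (rule Rats_of_rat)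
    then have gE: "\<gamma> \<in> CR.simple_extension \<rat> \<alpha>" unfolding \<gamma>_def
      by (rule SE_mult[OF SE_pow SE_rat])
    have "degree P dvd degree q" by (rule tower[OF irrq qa irrP Pg gE])
    moreover have "degree P = m" using assms(2) by (simp add: P_def degree_add_eq_left degree_monom_eq)
    ultimately have mj: "m dvd j" by (simp add: j_def)
    have "Rings.coprime m k" using ok assms(2) by simp
    then have "m * k dvd j" using mj kj by (rule divides_mult[rotated 2])
    then have "n dvd j" using nmk by simp
    then show False using j0 jn by (simp add: nat_dvd_not_less)
  qed
qed

end
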